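(* Let $C\subseteq\mathbb{F}_2^n$ be a linear code, let $0\le p\le1$, and let $t=\log_2(1+p)$. Then \[ \log_2 \mathbb{E}_{S \sim p}\big(2^{|S| - r_C(S)}\big) ~\le~ \mathbb{E}_{T \sim t}\big(|T| - r_C(T)\big). \] Moreover, equality holds if $C$ is a subcube, i.e. $C=\{x\in\mathbb{F}_2^n: x_i=0 \text{ for all } i\notin K\}$ for some $K\subseteq[n]$.
   Context: Fix a generating matrix of $C$ (a matrix over $\mathbb{F}_2$ whose rows span $C$, with columns indexed by $[n]$). For $S\subseteq[n]$, $r_C(S)$ is the rank over $\mathbb{F}_2$ of the set of columns indexed by $S$ (the rank function of the binary matroid on $[n]$ defined by the generating matrix; it does not depend on the choice of generating matrix). For $0\le\lambda\le1$, $S\sim\lambda$ denotes a random subset of $[n]$ containing each element independently with probability $\lambda$. *)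

theory Defs
  imports Complex_Main "HOL-Library.Z2"
begin

text \<open>Vectors of \<open>F_2^n\<close> are functions \<open>nat \<Rightarrow> bit\<close> vanishing outside \<open>{..<n}\<close>.
  A generating matrix with \<open>k\<close> rows and \<open>n\<close> columns is a function
  \<open>G :: nat \<Rightarrow> nat \<Rightarrow> bit\<close>, where \<open>G i j\<close> is the entry in row \<open>i < k\<close>, column \<open>j < n\<close>
  (other values are irrelevant).\<close>

definition row_space :: "nat \<Rightarrow> nat \<Rightarrow> (nat \<Rightarrow> nat \<Rightarrow> bit) \<Rightarrow> (nat \<Rightarrow> bit) set" where
  "row_space k n G =
     {x. \<exists>c :: nat \<Rightarrow> bit. \<forall>j. x j = (if j < n then (\<Sum>i<k. c i * G i j) else 0)}"

definition cols_indep :: "nat \<Rightarrow> (nat \<Rightarrow> nat \<Rightarrow> bit) \<Rightarrow> nat set \<Rightarrow> bool" where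
  "cols_indep k G T \<longleftrightarrow>
     (\<forall>a :: nat \<Rightarrow> bit. (\<forall>i<k. (\<Sum>j\<in>T. a j * G i j) = 0) \<longrightarrow> (\<forall>j\<in>T. a j = 0))"

text \<open>Rank over \<open>F_2\<close> of the set of columns indexed by \<open>S\<close> (for finite \<open>S\<close>).\<close>
definition col_rank :: "nat \<Rightarrow> (nat \<Rightarrow> nat \<Rightarrow> bit) \<Rightarrow> nat set \<Rightarrow> nat" where
  "col_rank k G S = Max {card T | T. T \<subseteq> S \<and> cols_indep k G T}"

text \<open>Expectation over a random subset \<open>S \<sim> \<lambda>\<close> of \<open>[n] = {..<n}\<close>, each element
  included independently with probability \<open>\<lambda>\<close>.\<close>
definition subset_expect :: "nat \<Rightarrow> real \<Rightarrow> (nat set \<Rightarrow> real) \<Rightarrow> real" where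
  "subset_expect n lam f =
     (\<Sum>S\<in>Pow {..<n}. lam ^ card S * (1 - lam) ^ (n - card S) * f S)"

definition subcube :: "nat set \<Rightarrow> (nat \<Rightarrow> bit) set" where
  "subcube K = {x. \<forall>j. j \<notin> K \<longrightarrow> x j = 0}"

end

theory Submission
  imports Defs "HOL-Analysis.Convex"
begin

lemma key_ineq:
  fixes p d :: real
  assumes "0 \<le> p" "p \<le> 1" "0 \<le> d" "d \<le> 1"
  shows "1 - p + p * 2 powr d \<le> (1+p) powr d"
proof -
  define a where "a = 1 + p"
  define s where "s = 1 - d"
  have a: "a > 0" "a \<ge> 1" using assms a_def by auto
  have s: "0 \<le> s" "s \<le> 1" using assms s_def by auto
  have Y1: "a powr s \<le> s*a + (1-s)"
    using Youngs_inequality_0[of s "1-s" a 1] a s by simp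
  have Y2: "(a/2) powr s \<le> s*(a/2) + (1-s)"
    using Youngs_inequality_0[of s "1-s" "a/2" 1] a s by simp
  have e1: "a powr d * a powr s = a" using a by (simp add: s_def flip: powr_add)
  have e2: "2 powr d * 2 powr s = 2" by (simp add: s_def flip: powr_add)
  have e3: "(a/2) powr s = a powr s / 2 powr s" using a by (simp add: powr_divide)
  have e4: "2 powr d = 2 / 2 powr s" using e2 by (simp add: field_simps)
  have "1 - p = (1-p)/a * (a powr d * a powr s)" using e1 a by simp
  moreover have "p * 2 powr d = 2*p/a * (a powr d * (a/2) powr s)"
  proof -
    have "a powr d * (a/2) powr s = a / 2 powr s" using e1 e3 by (simp add: field_simps)
    moreover have "2*p/a * (a / 2 powr s) = p * (2 / 2 powr s)" using a by (simp add: field_simps)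
    ultimately show ?thesis using e4 by simp
  qed
  ultimately have "1 - p + p * 2 powr d = a powr d * ((1-p)/a * a powr s + 2*p/a * (a/2) powr s)"
    by (simp add: algebra_simps)
  also have "\<dots> \<le> a powr d * ((1-p)/a * (s*a + (1-s)) + 2*p/a * (s*(a/2) + (1-s)))"
    apply (rule mult_left_mono)
     apply (rule add_mono)
      apply (rule mult_left_mono[OF Y1]) using a assms apply simp
     apply (rule mult_left_mono[OF Y2]) using a assms apply simp
    by simp
  also have "(1-p)/a * (s*a + (1-s)) + 2*p/a * (s*(a/2) + (1-s)) = 1"
    using a assms(1) unfolding a_def by (simp add: field_simps) (smt (verit) mult_nonneg_nonneg)
  finally show ?thesis by (simp add: a_def)
qed

lemma "t = log 2 (1+p) \<Longrightarrow> 0 \<le> (p::real) \<Longrightarrow> p \<le> 1 \<Longrightarrow> 0 \<le> t \<and> t \<le> 1"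
  by simp

lemma se_Suc:
  "subset_expect (Suc n) lam F = (1-lam) * subset_expect n lam F + lam * subset_expect n lam (\<lambda>S. F (insert n S))"
proof -
  have P: "Pow {..<Suc n} = Pow {..<n} \<union> insert n ` Pow {..<n}"
    by (simp add: lessThan_Suc Pow_insert)
  have disj: "Pow {..<n} \<inter> insert n ` Pow {..<n} = {}" by auto
  have inj: "inj_on (insert n) (Pow {..<n})"
  proof (rule inj_onI)
    fix x y assume "x \<in> Pow {..<n}" "y \<in> Pow {..<n}" and eq: "insert n x = insert n y"
    then have "x = insert n x - {n}" "y = insert n y - {n}" by auto
    then show "x = y" using eq by simp
  qed
  define w where "w = (\<lambda>m S. lam ^ card S * (1 - lam) ^ (m - card S) * F S)"
  have "subset_expect (Suc n) lam F = (\<Sum>S\<in>Pow {..<n}. w (Suc n) S) + (\<Sum>S\<in>insert n ` Pow {..<n}. w (Suc n) S)"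
    unfolding subset_expect_def w_def P by (rule sum.union_disjoint) (use disj in auto)
  also have "(\<Sum>S\<in>insert n ` Pow {..<n}. w (Suc n) S) = (\<Sum>S\<in>Pow {..<n}. w (Suc n) (insert n S))"
    by (rule sum.reindex_cong[OF inj refl refl])
  also have "(\<Sum>S\<in>Pow {..<n}. w (Suc n) S) = (1-lam) * subset_expect n lam F"
    unfolding subset_expect_def sum_distrib_left
  proof (rule sum.cong[OF refl])
    fix S assume "S \<in> Pow {..<n}"
    then have "card S \<le> n" using card_mono[of "{..<n}" S] by auto
    then have "Suc n - card S = Suc (n - card S)" by simp
    then show "w (Suc n) S = (1 - lam) * (lam ^ card S * (1 - lam) ^ (n - card S) * F S)"
      unfolding w_def by simp
  qed
  also have "(\<Sum>S\<in>Pow {..<n}. w (Suc n) (insert n S)) = lam * subset_expect n lam (\<lambda>S. F (insert n S))"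
    unfolding subset_expect_def sum_distrib_left
  proof (rule sum.cong[OF refl])
    fix S assume S: "S \<in> Pow {..<n}"
    then have "card S \<le> n" using card_mono[of "{..<n}" S] by auto
    moreover have "card (insert n S) = Suc (card S)" using S finite_subset[of S "{..<n}"]
      by (subst card_insert_disjoint) auto
    ultimately show "w (Suc n) (insert n S) = lam * (lam ^ card S * (1 - lam) ^ (n - card S) * F (insert n S))"
      unfolding w_def by simp
  qed
  finally show ?thesis .
qed

lemma se_cong: "(\<And>S. S \<subseteq> {..<n} \<Longrightarrow> F S = G S) \<Longrightarrow> subset_expect n lam F = subset_expect n lam G"
  unfolding subset_expect_def by (rule sum.cong) auto

lemma se_const: "subset_expect n lam (\<lambda>_. c) = c"
proof (induction n)
  case 0
  then show ?case by (simp add: subset_expect_def)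
next
  case (Suc n)
  then show ?case by (simp add: se_Suc algebra_simps)
qed

lemma se_lin: "subset_expect n lam (\<lambda>S. a * F S + b * G S) = a * subset_expect n lam F + b * subset_expect n lam G"
proof -
  have e: "\<And>(w::real) x y. w * (a * x + b * y) = a * (w * x) + b * (w * y)" by (simp add: algebra_simps)
  show ?thesis
    unfolding subset_expect_def mult.assoc e sum.distrib sum_distrib_left[symmetric] ..
qed

lemma se_mono: assumes "0 \<le> lam" "lam \<le> 1" "\<And>S. S \<subseteq> {..<n} \<Longrightarrow> F S \<le> G S"
  shows "subset_expect n lam F \<le> subset_expect n lam G"
  unfolding subset_expect_def
proof (rule sum_mono)
  fix S assume "S \<in> Pow {..<n}"
  then have "F S \<le> G S" using assms(3) by blast
  moreover have "0 \<le> lam ^ card S * (1 - lam) ^ (n - card S)" using assms(1,2) by (simp add: zero_le_mult_iff)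
  ultimately show "lam ^ card S * (1 - lam) ^ (n - card S) * F S \<le> lam ^ card S * (1 - lam) ^ (n - card S) * G S"
    by (rule mult_left_mono)
qed

lemma se_pos: assumes "0 \<le> lam" "lam \<le> 1" "\<And>S. F S > 0"
  shows "subset_expect n lam F > 0"
  using assms(3)
proof (induction n arbitrary: F)
  case 0
  then show ?case by (simp add: subset_expect_def)
next
  case (Suc n)
  have X: "subset_expect n lam F > 0" by (rule Suc.IH) (rule Suc.prems)
  have Y: "subset_expect n lam (\<lambda>S. F (insert n S)) > 0" by (rule Suc.IH) (rule Suc.prems)
  show ?case
  proof (cases "lam < 1")
    case True
    have "(1-lam) * subset_expect n lam F > 0" using True X by simp
    moreover have "lam * subset_expect n lam (\<lambda>S. F (insert n S)) \<ge> 0" using Y assms(1) by simp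
    ultimately show ?thesis unfolding se_Suc by linarith
  next
    case False
    then have "lam = 1" using assms(2) by simp
    then show ?thesis using Y unfolding se_Suc by simp
  qed
qed

definition goodf :: "nat \<Rightarrow> (nat set \<Rightarrow> real) \<Rightarrow> bool" where
  "goodf n f \<longleftrightarrow> (\<forall>S e. S \<subseteq> {..<n} \<longrightarrow> e < n \<longrightarrow> e \<notin> S \<longrightarrow> f S \<le> f (insert e S) \<and> f (insert e S) \<le> f S + 1)"

lemma main_ineq:
  assumes p: "0 \<le> p" "p \<le> 1" and t: "t = log 2 (1+p)"
  shows "goodf n f \<Longrightarrow> subset_expect n p (\<lambda>S. 2 powr f S) \<le> 2 powr (subset_expect n t f)"
proof (induction n arbitrary: f)
  case 0
  then show ?case by (simp add: subset_expect_def)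
next
  case (Suc n)
  have t01: "0 \<le> t" "t \<le> 1" using p t by simp_all
  define f2 where "f2 = (\<lambda>S. f (insert n S))"
  have g1: "goodf n f" using Suc.prems unfolding goodf_def
    by (metis less_SucI order.trans lessThan_Suc subset_insertI)
  have g2: "goodf n f2" unfolding goodf_def f2_def
  proof (intro allI impI)
    fix S e assume S: "S \<subseteq> {..<n}" "e < n" "e \<notin> S"
    have "insert n S \<subseteq> {..<Suc n}" "e < Suc n" "e \<notin> insert n S" using S by auto
    then show "f (insert n S) \<le> f (insert n (insert e S)) \<and> f (insert n (insert e S)) \<le> f (insert n S) + 1"
      using Suc.prems unfolding goodf_def by (metis insert_commute)
  qed
  define a where "a = subset_expect n t f"
  define b where "b = subset_expect n t f2"
  have A: "subset_expect n p (\<lambda>S. 2 powr f S) \<le> 2 powr a" unfolding a_def by (rule Suc.IH[OF g1])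
  have B: "subset_expect n p (\<lambda>S. 2 powr f2 S) \<le> 2 powr b" unfolding b_def by (rule Suc.IH[OF g2])
  have fb: "\<And>S. S \<subseteq> {..<n} \<Longrightarrow> f S \<le> f2 S \<and> f2 S \<le> f S + 1"
  proof -
    fix S assume S: "S \<subseteq> {..<n}"
    have "S \<subseteq> {..<Suc n}" "n < Suc n" "n \<notin> S" using S by auto
    then show "f S \<le> f2 S \<and> f2 S \<le> f S + 1" using Suc.prems unfolding goodf_def f2_def by blast
  qed
  have "a \<le> b" unfolding a_def b_def using t01 fb by (intro se_mono) auto
  moreover have "b \<le> subset_expect n t (\<lambda>S. 1 * f S + 1 * 1)" unfolding b_def using t01 fb by (intro se_mono) auto
  then have "b \<le> a + 1" unfolding se_lin se_const a_def by simp
  ultimately have d: "0 \<le> b - a" "b - a \<le> 1" by auto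
  have "subset_expect (Suc n) p (\<lambda>S. 2 powr f S) = (1-p) * subset_expect n p (\<lambda>S. 2 powr f S) + p * subset_expect n p (\<lambda>S. 2 powr f2 S)"
    unfolding se_Suc f2_def ..
  also have "\<dots> \<le> (1-p) * 2 powr a + p * 2 powr b"
    using A B p by (intro add_mono mult_left_mono) auto
  also have "\<dots> = 2 powr a * (1 - p + p * 2 powr (b - a))"
    by (simp add: algebra_simps powr_diff)
  also have "\<dots> \<le> 2 powr a * (1+p) powr (b - a)"
    using key_ineq[OF p d] by simp
  also have "(1+p) powr (b - a) = 2 powr (t * (b - a))"
  proof -
    have "1 + p = 2 powr t" using t p by simp
    then show ?thesis by (simp add: powr_powr)
  qed
  also have "2 powr a * 2 powr (t * (b - a)) = 2 powr (subset_expect (Suc n) t f)"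
    unfolding se_Suc a_def b_def f2_def by (simp add: algebra_simps flip: powr_add)
  finally show ?case .
qed

lemma indep_empty: "cols_indep k G {}"
  unfolding cols_indep_def by simp

lemma indep_subset:
  assumes "cols_indep k G T" "T' \<subseteq> T" "finite T"
  shows "cols_indep k G T'"
  unfolding cols_indep_def
proof (intro allI impI)
  fix a :: "nat \<Rightarrow> bit" assume h: "\<forall>i<k. (\<Sum>j\<in>T'. a j * G i j) = 0"
  define a' where "a' = (\<lambda>j. if j \<in> T' then a j else 0)"
  have "\<forall>i<k. (\<Sum>j\<in>T. a' j * G i j) = 0"
  proof (intro allI impI)
    fix i assume "i < k"
    have "(\<Sum>j\<in>T. a' j * G i j) = (\<Sum>j\<in>T'. a' j * G i j)"
      using assms(2,3) by (intro sum.mono_neutral_right) (auto simp: a'_def)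
    also have "\<dots> = (\<Sum>j\<in>T'. a j * G i j)" by (simp add: a'_def)
    finally show "(\<Sum>j\<in>T. a' j * G i j) = 0" using h \<open>i < k\<close> by simp
  qed
  then have "\<forall>j\<in>T. a' j = 0" using assms(1) unfolding cols_indep_def by blast
  then show "\<forall>j\<in>T'. a j = 0"
  proof (intro ballI)
    fix j assume "\<forall>j\<in>T. a' j = 0" "j \<in> T'"
    then have "a' j = 0" using assms(2) by blast
    then show "a j = 0" using \<open>j \<in> T'\<close> by (simp add: a'_def)
  qed
qed

lemma rank_set_finite: "finite S \<Longrightarrow> finite {card T | T. T \<subseteq> S \<and> cols_indep k G T}"
proof -
  assume "finite S"
  have "{card T | T. T \<subseteq> S \<and> cols_indep k G T} \<subseteq> card ` Pow S" by auto
  then show ?thesis using \<open>finite S\<close> finite_subset by blast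
qed

lemma rank_ge: "finite S \<Longrightarrow> T \<subseteq> S \<Longrightarrow> cols_indep k G T \<Longrightarrow> card T \<le> col_rank k G S"
  unfolding col_rank_def by (rule Max_ge) (auto intro: rank_set_finite)

lemma rank_obtain: assumes "finite S"
  obtains T where "T \<subseteq> S" "cols_indep k G T" "card T = col_rank k G S"
proof -
  have "col_rank k G S \<in> {card T | T. T \<subseteq> S \<and> cols_indep k G T}"
    unfolding col_rank_def using rank_set_finite[OF assms] indep_empty by (intro Max_in) auto
  then show ?thesis using that by auto
qed

lemma rank_mono: "finite S' \<Longrightarrow> S \<subseteq> S' \<Longrightarrow> col_rank k G S \<le> col_rank k G S'"
proof -
  assume a: "finite S'" "S \<subseteq> S'"
  then have "finite S" using finite_subset by blast
  then obtain T where "T \<subseteq> S" "cols_indep k G T" "card T = col_rank k G S" by (rule rank_obtain)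
  then show ?thesis using a rank_ge[of S' T] by auto
qed

lemma rank_insert: assumes "finite S" shows "col_rank k G (insert e S) \<le> col_rank k G S + 1"
proof -
  obtain T where T: "T \<subseteq> insert e S" "cols_indep k G T" "card T = col_rank k G (insert e S)"
    using rank_obtain[of "insert e S"] assms by auto
  have fT: "finite T" using T(1) assms finite_subset by blast
  have "cols_indep k G (T - {e})" using indep_subset[OF T(2) _ fT] by blast
  then have "card (T - {e}) \<le> col_rank k G S" using T(1) assms by (intro rank_ge) auto
  moreover have "card T \<le> card (T - {e}) + 1" 
  proof (cases "e \<in> T")
    case True
    have "Suc (card (T - {e})) = card T" by (rule card_Suc_Diff1[OF fT True])
    then show ?thesis by simp
  next
    case False
    then show ?thesis by simp
  qed
  ultimately show ?thesis using T(3) by simp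
qed

lemma goodf_rank: "goodf n (\<lambda>S. real (card S) - real (col_rank k G S))"
  unfolding goodf_def
proof (intro allI impI)
  fix S e assume S: "S \<subseteq> {..<n}" "e < n" "e \<notin> S"
  have fS: "finite S" using S(1) finite_subset by blast
  have c: "card (insert e S) = card S + 1" using fS S(3) by simp
  have "col_rank k G S \<le> col_rank k G (insert e S)" using fS by (intro rank_mono) auto
  moreover have "col_rank k G (insert e S) \<le> col_rank k G S + 1" using fS by (rule rank_insert)
  ultimately show "real (card S) - real (col_rank k G S) \<le> real (card (insert e S)) - real (col_rank k G (insert e S)) \<and>
       real (card (insert e S)) - real (col_rank k G (insert e S)) \<le> real (card S) - real (col_rank k G S) + 1"
    using c by simp
qed

lemma mult_delta1: "(if P then 1 else 0) * (x::'a::semiring_1) = (if P then x else 0)" by simp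
lemma mult_delta2: "(x::'a::semiring_1) * (if P then 1 else 0) = (if P then x else 0)" by simp

lemma sub_zero_col:
  assumes R: "row_space k n G = subcube K" and j: "j < n" "j \<notin> K" and i: "i < k"
  shows "G i j = 0"
proof -
  define c where "c = (\<lambda>i'. if i' = i then (1::bit) else 0)"
  define x where "x = (\<lambda>j. if j < n then (\<Sum>i'<k. c i' * G i' j) else 0)"
  have "x \<in> row_space k n G" unfolding row_space_def x_def by blast
  then have "x j = 0" using R j unfolding subcube_def by auto
  moreover have "x j = G i j" unfolding x_def c_def
    by (simp only: if_P[OF j(1)] mult_delta1 sum.delta[OF finite_lessThan] lessThan_iff if_P[OF i])
  ultimately show ?thesis by simp
qed

lemma sub_unit:
  assumes R: "row_space k n G = subcube K" and j0: "j0 \<in> K"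
  obtains c where "\<And>j. j < n \<Longrightarrow> (if j = j0 then 1 else 0) = (\<Sum>i<k. c i * G i j)"
proof -
  have "(\<lambda>j. if j = j0 then (1::bit) else 0) \<in> subcube K" using j0 unfolding subcube_def by auto
  then have "(\<lambda>j. if j = j0 then (1::bit) else 0) \<in> row_space k n G" using R by simp
  then have "\<exists>c. \<forall>j. (if j = j0 then (1::bit) else 0) = (if j < n then (\<Sum>i<k. c i * G i j) else 0)"
    unfolding row_space_def mem_Collect_eq .
  then obtain c where c: "\<forall>j. (if j = j0 then (1::bit) else 0) = (if j < n then (\<Sum>i<k. c i * G i j) else 0)"
    by blast
  show ?thesis
  proof (rule that)
    fix j :: nat assume "j < n"
    then show "(if j = j0 then 1 else 0) = (\<Sum>i<k. c i * G i j)" using c by metis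
  qed
qed

lemma sub_rank:
  assumes R: "row_space k n G = subcube K" and S: "S \<subseteq> {..<n}"
  shows "col_rank k G S = card (S \<inter> K)"
proof -
  have fS: "finite S" using S finite_subset by blast
  have ind: "cols_indep k G (S \<inter> K)"
    unfolding cols_indep_def
  proof (intro allI impI ballI)
    fix a :: "nat \<Rightarrow> bit" and j0
    assume h: "\<forall>i<k. (\<Sum>j\<in>S \<inter> K. a j * G i j) = 0" and j0: "j0 \<in> S \<inter> K"
    obtain c where c: "\<And>j. j < n \<Longrightarrow> (if j = j0 then 1 else 0) = (\<Sum>i<k. c i * G i j)"
      using sub_unit[OF R, of j0] j0 by auto
    have "(\<Sum>i<k. c i * (\<Sum>j\<in>S \<inter> K. a j * G i j)) = 0"
    proof (rule sum.neutral, rule ballI)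
      fix i assume "i \<in> {..<k}"
      then have "(\<Sum>j\<in>S \<inter> K. a j * G i j) = 0" using h by blast
      then show "c i * (\<Sum>j\<in>S \<inter> K. a j * G i j) = 0" by (simp only: mult_zero_right)
    qed
    then have "0 = (\<Sum>i<k. c i * (\<Sum>j\<in>S \<inter> K. a j * G i j))" by simp
    also have "\<dots> = (\<Sum>i<k. \<Sum>j\<in>S \<inter> K. a j * (c i * G i j))"
      unfolding sum_distrib_left by (rule sum.cong[OF refl], rule sum.cong[OF refl], rule mult.left_commute)
    also have "\<dots> = (\<Sum>j\<in>S \<inter> K. \<Sum>i<k. a j * (c i * G i j))"
      by (rule sum.swap)
    also have "\<dots> = (\<Sum>j\<in>S \<inter> K. a j * (\<Sum>i<k. c i * G i j))"
      by (simp only: sum_distrib_left)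
    also have "\<dots> = (\<Sum>j\<in>S \<inter> K. a j * (if j = j0 then 1 else 0))"
    proof (rule sum.cong[OF refl])
      fix j assume "j \<in> S \<inter> K"
      then have "j < n" using S by auto
      show "a j * (\<Sum>i<k. c i * G i j) = a j * (if j = j0 then 1 else 0)"
        by (simp only: c[OF \<open>j < n\<close>])
    qed
    also have "\<dots> = a j0"
    proof -
      have fSK: "finite (S \<inter> K)" using fS by simp
      show ?thesis by (simp only: mult_delta2 sum.delta[OF fSK] if_P[OF j0])
    qed
    finally show "a j0 = 0" by simp
  qed
  have sub: "T \<subseteq> S \<inter> K" if T: "T \<subseteq> S" "cols_indep k G T" for T
  proof
    fix j assume jT: "j \<in> T"
    show "j \<in> S \<inter> K"
    proof (rule ccontr)
      assume "j \<notin> S \<inter> K"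
      then have jK: "j \<notin> K" using jT T by auto
      have jn: "j < n" using jT T S by auto
      have fT: "finite T" using T fS finite_subset by blast
      define a where "a = (\<lambda>j'. if j' = j then (1::bit) else 0)"
      have "\<forall>i<k. (\<Sum>j'\<in>T. a j' * G i j') = 0"
      proof (intro allI impI)
        fix i assume "i < k"
        show "(\<Sum>j'\<in>T. a j' * G i j') = 0"
          by (simp only: a_def mult_delta1 sum.delta[OF fT] if_P[OF jT] sub_zero_col[OF R jn jK \<open>i < k\<close>])
      qed
      then have "a j = 0" using T(2) jT unfolding cols_indep_def by blast
      then show False by (simp add: a_def)
    qed
  qed
  obtain T where T: "T \<subseteq> S" "cols_indep k G T" "card T = col_rank k G S" using rank_obtain[OF fS] by blast
  have "card T \<le> card (S \<inter> K)" using sub[OF T(1,2)] fS by (intro card_mono) auto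
  moreover have "card (S \<inter> K) \<le> col_rank k G S" using ind fS by (intro rank_ge) auto
  ultimately show ?thesis using T(3) by simp
qed

lemma se_scale: "subset_expect n lam (\<lambda>S. c * F S) = c * subset_expect n lam F"
  unfolding subset_expect_def sum_distrib_left by (simp add: mult.left_commute)

lemma sub_expect:
  "subset_expect n p (\<lambda>S. 2 powr real (card (S - K))) = (1+p) ^ card ({..<n} - K)
   \<and> subset_expect n t (\<lambda>S. real (card (S - K))) = t * card ({..<n} - K)"
proof (induction n)
  case 0 then show ?case by (simp add: subset_expect_def)
next
  case (Suc n)
  have cS: "card (insert n S - K) = (if n \<in> K then card (S - K) else Suc (card (S - K)))"
    if "S \<subseteq> {..<n}" for S
  proof -
    have "finite (S - K)" "n \<notin> S - K" using that finite_subset by auto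
    then show ?thesis by (cases "n \<in> K") (auto simp: insert_Diff_if)
  qed
  have cN: "card ({..<Suc n} - K) = (if n \<in> K then card ({..<n} - K) else Suc (card ({..<n} - K)))"
    using cS[of "{..<n}"] by (simp add: lessThan_Suc)
  have e1: "subset_expect n p (\<lambda>S. 2 powr real (card (insert n S - K))) =
      subset_expect n p (\<lambda>S. (if n \<in> K then 1 else 2) * 2 powr real (card (S - K)))"
    using cS by (intro se_cong) (simp add: powr_add)
  have e2: "subset_expect n t (\<lambda>S. real (card (insert n S - K))) =
      subset_expect n t (\<lambda>S. 1 * real (card (S - K)) + (if n \<in> K then 0 else 1) * 1)"
    using cS by (intro se_cong) simp
  show ?case
    unfolding se_Suc e1 e2 se_scale se_lin se_const using Suc.IH cN
    by (cases "n \<in> K") (simp_all add: algebra_simps)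
qed

theorem proposition1p3:
  fixes n k :: nat and G :: "nat \<Rightarrow> nat \<Rightarrow> bit" and p :: real
  assumes "0 \<le> p" and "p \<le> 1"
  defines "t \<equiv> log 2 (1 + p)"
  shows "log 2 (subset_expect n p (\<lambda>S. 2 powr (real (card S) - real (col_rank k G S))))
           \<le> subset_expect n t (\<lambda>T. real (card T) - real (col_rank k G T))
         \<and> ((\<exists>K. K \<subseteq> {..<n} \<and> row_space k n G = subcube K) \<longrightarrow>
            log 2 (subset_expect n p (\<lambda>S. 2 powr (real (card S) - real (col_rank k G S))))
              = subset_expect n t (\<lambda>T. real (card T) - real (col_rank k G T)))"
proof -
  define f where "f = (\<lambda>S. real (card S) - real (col_rank k G S))"
  have tdef: "t = log 2 (1 + p)" unfolding t_def ..
  have pos: "subset_expect n p (\<lambda>S. 2 powr f S) > 0" by (rule se_pos) (use assms in auto)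
  have gf: "goodf n f" unfolding f_def by (rule goodf_rank)
  have le: "subset_expect n p (\<lambda>S. 2 powr f S) \<le> 2 powr subset_expect n t f"
    by (rule main_ineq[OF assms(1,2) tdef gf])
  have "log 2 (subset_expect n p (\<lambda>S. 2 powr f S)) \<le> log 2 (2 powr subset_expect n t f)"
    using pos le by (subst log_le_cancel_iff) auto
  then have ineq: "log 2 (subset_expect n p (\<lambda>S. 2 powr f S)) \<le> subset_expect n t f" by simp
  have eq: "log 2 (subset_expect n p (\<lambda>S. 2 powr f S)) = subset_expect n t f"
    if "\<exists>K. K \<subseteq> {..<n} \<and> row_space k n G = subcube K"
  proof -
    from that obtain K where KK: "K \<subseteq> {..<n} \<and> row_space k n G = subcube K" ..
    note K = conjunct1[OF KK] conjunct2[OF KK]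
    have fK: "f S = real (card (S - K))" if S: "S \<subseteq> {..<n}" for S
    proof -
      have "finite S" using S finite_lessThan by (rule finite_subset)
      then have "card S = card (S \<inter> K) + card (S - K)" by (rule card_Int_Diff)
      then show ?thesis unfolding f_def sub_rank[OF K(2) S] by simp
    qed
    have "subset_expect n p (\<lambda>S. 2 powr f S) = subset_expect n p (\<lambda>S. 2 powr real (card (S - K)))"
      using fK by (intro se_cong) simp
    also have "\<dots> = (1+p) ^ card ({..<n} - K)" by (rule conjunct1[OF sub_expect[of n p K t]])
    finally have L: "log 2 (subset_expect n p (\<lambda>S. 2 powr f S)) = card ({..<n} - K) * t"
      using assms(1) by (simp add: log_nat_power tdef)
    have "subset_expect n t f = subset_expect n t (\<lambda>S. real (card (S - K)))"
      using fK by (intro se_cong) simp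
    also have "\<dots> = t * card ({..<n} - K)" by (rule conjunct2[OF sub_expect[of n p K t]])
    finally show ?thesis using L by simp
  qed
  show ?thesis using ineq eq unfolding f_def by (intro conjI impI) simp_all
qed

end
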